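(* Let $t\geq 5$ and let $H$ be the simple graph with vertex set $\{x_1,x_2,x_3,y_1,\dots,y_{t-4}\}$ whose edges are $x_1x_2,x_2x_3,x_1x_3$ and all edges $x_iy_j$ for $i\in\{1,2,3\}$, $1\leq j\leq t-4$. Then $L(H)$ has a $K_t$-immersion.
   Context: $L(H)$ is the simple graph with vertex set $E(H)$ in which two distinct edges of $H$ are adjacent iff they share an endpoint. A graph $G$ has a $K_t$-immersion if there is an injective map $\phi$ from the vertex set of $K_t$ to $V(G)$ and, for each pair $u\neq v$ of vertices of $K_t$, a path in $G$ joining $\phi(u)$ and $\phi(v)$, such that these paths are pairwise edge-disjoint. *)

theory Defs
  imports Main
begin

type_synonym 'a sgraph = "'a set \<times> 'a set set"

definition verts :: "'a sgraph \<Rightarrow> 'a set" where "verts G = fst G"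
definition edges :: "'a sgraph \<Rightarrow> 'a set set" where "edges G = snd G"

definition simple_graph :: "'a sgraph \<Rightarrow> bool" where
  "simple_graph G \<longleftrightarrow> (\<forall>e\<in>edges G. card e = 2 \<and> e \<subseteq> verts G)"

definition line_graph :: "'a sgraph \<Rightarrow> 'a set sgraph" where
  "line_graph H = (edges H, {{e, f} | e f. e \<in> edges H \<and> f \<in> edges H \<and> e \<noteq> f \<and> e \<inter> f \<noteq> {}})"

definition is_path :: "'a sgraph \<Rightarrow> 'a list \<Rightarrow> 'a \<Rightarrow> 'a \<Rightarrow> bool" where
  "is_path G p u v \<longleftrightarrow> p \<noteq> [] \<and> hd p = u \<and> last p = v \<and> distinct p \<and>
     set p \<subseteq> verts G \<and> (\<forall>i. Suc i < length p \<longrightarrow> {p ! i, p ! Suc i} \<in> edges G)"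

definition path_edges :: "'a list \<Rightarrow> 'a set set" where
  "path_edges p = {{p ! i, p ! Suc i} | i. Suc i < length p}"

text \<open>K_t-immersion; the vertices of K_t are 0, ..., t-1 and each unordered pair
  {u,v} is represented by u < v.\<close>
definition has_Kt_immersion :: "'a sgraph \<Rightarrow> nat \<Rightarrow> bool" where
  "has_Kt_immersion G t \<longleftrightarrow>
     (\<exists>(\<phi> :: nat \<Rightarrow> 'a) (P :: nat \<Rightarrow> nat \<Rightarrow> 'a list).
        inj_on \<phi> {0..<t} \<and> \<phi> ` {0..<t} \<subseteq> verts G \<and>
        (\<forall>u v. u < v \<and> v < t \<longrightarrow> is_path G (P u v) (\<phi> u) (\<phi> v)) \<and>
        (\<forall>u v u' v'. u < v \<and> v < t \<and> u' < v' \<and> v' < t \<and> (u, v) \<noteq> (u', v') \<longrightarrow>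
            path_edges (P u v) \<inter> path_edges (P u' v') = {}))"

datatype hvert = X nat | Y nat

definition H_graph :: "nat \<Rightarrow> hvert sgraph" where
  "H_graph t = ({X 1, X 2, X 3} \<union> {Y j | j. 1 \<le> j \<and> j \<le> t - 4},
     {{X 1, X 2}, {X 2, X 3}, {X 1, X 3}} \<union>
     {{X i, Y j} | i j. i \<in> {1, 2, 3} \<and> 1 \<le> j \<and> j \<le> t - 4})"

end

theory Submission
  imports Defs
begin

definition phi :: "nat \<Rightarrow> hvert set" where
  "phi i = (if i = 0 then {X 1, X 2} else if i = 1 then {X 1, X 3} else if i = 2 then {X 2, X 3}
            else if i = 3 then {X 3, Y 1} else {X 1, Y (i - 3)})"

definition PP :: "nat \<Rightarrow> nat \<Rightarrow> hvert set list" where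
  "PP u v = (if u = 2 then (if v \<ge> 4 then [phi 2, {X 2, Y (v - 3)}, phi v] else [phi u, phi v])
     else if u = 3 then (if v = 4 then [phi 3, phi 4] else [phi 3, {X 3, Y (v - 3)}, phi v])
     else if v = 3 \<and> u = 0 then [phi 0, {X 2, Y 1}, phi 3]
     else [phi u, phi v])"

lemma pe2: "path_edges [a, b] = {{a, b}}"
  unfolding path_edges_def by auto

lemma pe3: "path_edges [a, b, c] = {{a, b}, {b, c}}"
proof -
  have "{i. Suc i < length [a,b,c]} = {0, 1}" by auto
  then have "path_edges [a,b,c] = (\<lambda>i. {[a,b,c] ! i, [a,b,c] ! Suc i}) ` {0,1}"
    unfolding path_edges_def by blast
  then show ?thesis by simp
qed

lemma memE: "i \<in> {1,2,3} \<Longrightarrow> 1 \<le> j \<Longrightarrow> j \<le> t - 4 \<Longrightarrow> {X i, Y j} \<in> edges (H_graph t)"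
  unfolding edges_def H_graph_def by auto

lemma memT: "{X 1, X 2} \<in> edges (H_graph t)" "{X 2, X 3} \<in> edges (H_graph t)"
  "{X 1, X 3} \<in> edges (H_graph t)"
  unfolding edges_def H_graph_def by auto

lemma memT': "{X (Suc 0), X 2} \<in> edges (H_graph t)" "{X (Suc 0), X 3} \<in> edges (H_graph t)"
  using memT by simp_all

lemma adj: "a \<in> edges H \<Longrightarrow> b \<in> edges H \<Longrightarrow> a \<noteq> b \<Longrightarrow> a \<inter> b \<noteq> {} \<Longrightarrow>
   {a, b} \<in> edges (line_graph H)"
  unfolding line_graph_def edges_def by auto

lemma path2: "a \<in> edges H \<Longrightarrow> b \<in> edges H \<Longrightarrow> a \<noteq> b \<Longrightarrow> a \<inter> b \<noteq> {} \<Longrightarrow>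
   is_path (line_graph H) [a, b] a b"
  unfolding is_path_def
  apply (intro conjI)
  apply (simp_all add: adj)
  apply (simp add: line_graph_def verts_def edges_def)
  done

lemma path3: "a \<in> edges H \<Longrightarrow> b \<in> edges H \<Longrightarrow> c \<in> edges H \<Longrightarrow> a \<noteq> b \<Longrightarrow> b \<noteq> c \<Longrightarrow> a \<noteq> c \<Longrightarrow>
   a \<inter> b \<noteq> {} \<Longrightarrow> b \<inter> c \<noteq> {} \<Longrightarrow>
   is_path (line_graph H) [a, b, c] a c"
  unfolding is_path_def
  apply (intro conjI)
  apply (simp_all)
  apply (simp add: line_graph_def verts_def edges_def)
  apply (intro allI impI)
  subgoal for i
    by (cases i) (auto simp: adj)
  done

lemma phi_mem: "i < t \<Longrightarrow> 5 \<le> t \<Longrightarrow> phi i \<in> edges (H_graph t)"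
  unfolding phi_def by (auto simp: memT memT' intro!: memE)

lemma XY_ne[simp]: "a \<noteq> b \<Longrightarrow> {X a, Y j} \<noteq> {X b, Y k}"
  by (auto simp: doubleton_eq_iff)
lemma XY_XX[simp]: "{X a, Y j} \<noteq> {X b, X c}" "{X b, X c} \<noteq> {X a, Y j}"
  by (auto simp: doubleton_eq_iff)


lemma phi_ge4: "i \<ge> 4 \<Longrightarrow> phi i = {X 1, Y (i - 3)}" by (simp add: phi_def)
lemma phi_simps: "phi 0 = {X 1, X 2}" "phi 1 = {X 1, X 3}" "phi 2 = {X 2, X 3}" "phi 3 = {X 3, Y 1}" "phi (Suc 0) = {X 1, X 3}"
  by (simp_all add: phi_def)

lemma phi_inj: "phi a = phi b \<longleftrightarrow> a = b"
proof
  assume h: "phi a = phi b"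
  have c: "\<And>(i::nat) P. \<lbrakk>i = 0 \<Longrightarrow> P; i = 1 \<Longrightarrow> P; i = 2 \<Longrightarrow> P; i = 3 \<Longrightarrow> P; i \<ge> 4 \<Longrightarrow> P\<rbrakk> \<Longrightarrow> P"
    by linarith
  show "a = b"
    apply (rule c[of a]; rule c[of b])
    using h by (simp_all add: phi_ge4 phi_simps doubleton_eq_iff)
qed simp

lemma X1_in: "u \<noteq> 2 \<Longrightarrow> u \<noteq> 3 \<Longrightarrow> X 1 \<in> phi u" by (simp add: phi_def)

lemma PP_path: assumes "5 \<le> t" "u < v" "v < t"
  shows "is_path (line_graph (H_graph t)) (PP u v) (phi u) (phi v)"
proof -
  have m: "\<And>i. i < t \<Longrightarrow> phi i \<in> edges (H_graph t)" using phi_mem assms(1) by blast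
  have mu: "phi u \<in> edges (H_graph t)" "phi v \<in> edges (H_graph t)" using m assms by auto
  have ne: "phi u \<noteq> phi v" using phi_inj assms by simp
  consider "u = 2" "v \<ge> 4" | "u = 3" "v \<noteq> 4" | "u = 0" "v = 3"
    | "\<not> (u = 2 \<and> v \<ge> 4)" "\<not> (u = 3 \<and> v \<noteq> 4)" "\<not> (u = 0 \<and> v = 3)" by blast
  then show ?thesis
  proof cases
    case 1
    have e: "{X 2, Y (v - 3)} \<in> edges (H_graph t)" using assms 1 by (intro memE) auto
    have pp: "PP u v = [phi u, {X 2, Y (v - 3)}, phi v]" using 1 by (simp add: PP_def)
    show ?thesis using 1 mu e unfolding pp
      by (intro path3) (auto simp: phi_ge4 phi_simps)
  next
    case 2
    have e: "{X 3, Y (v - 3)} \<in> edges (H_graph t)" using assms 2 by (intro memE) auto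
    have v5: "v \<ge> 5" using 2 assms by simp
    have pp: "PP u v = [phi u, {X 3, Y (v - 3)}, phi v]" using 2 by (simp add: PP_def)
    show ?thesis using 2 v5 mu e unfolding pp
      by (intro path3) (auto simp: phi_ge4 phi_simps doubleton_eq_iff)
  next
    case 3
    have e: "{X 2, Y 1} \<in> edges (H_graph t)" using assms 3 by (intro memE) auto
    have pp: "PP u v = [phi u, {X 2, Y 1}, phi v]" using 3 by (simp add: PP_def)
    show ?thesis using 3 mu e unfolding pp
      by (intro path3) (auto simp: phi_simps doubleton_eq_iff)
  next
    case 4
    have pp: "PP u v = [phi u, phi v]" using 4 unfolding PP_def by auto
    have "phi u \<inter> phi v \<noteq> {}"
    proof (cases "u \<in> {2,3} \<or> v \<in> {2,3}")
      case True
      then have "(u = 0 \<and> v = 2) \<or> (u = 1 \<and> v = 2) \<or> (u = 1 \<and> v = 3) \<or> (u = 2 \<and> v = 3) \<or> (u = 3 \<and> v = 4)"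
        using 4 assms by auto
      then show ?thesis by (auto simp: phi_simps phi_ge4)
    next
      case False
      then show ?thesis using X1_in by blast
    qed
    then show ?thesis unfolding pp using mu ne by (intro path2)
  qed
qed

lemma X2_not_phi: "{X 2, Y j} \<noteq> phi i" "phi i \<noteq> {X 2, Y j}"
  unfolding phi_def by (auto simp: doubleton_eq_iff)

lemma X3_not_phi: "j \<noteq> 1 \<Longrightarrow> {X 3, Y j} \<noteq> phi i" "j \<noteq> 1 \<Longrightarrow> phi i \<noteq> {X 3, Y j}"
  unfolding phi_def by (auto simp: doubleton_eq_iff)

lemma X23: "{X 2, Y j} \<noteq> {X 3, Y k}" "{X 3, Y k} \<noteq> {X 2, Y j}"
  by (auto simp: doubleton_eq_iff)

lemma XYeq: "({X a, Y j} = {X a, Y k}) = (j = k)"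
  by (auto simp: doubleton_eq_iff)


lemma PP_A: "u = 2 \<Longrightarrow> v \<ge> 4 \<Longrightarrow> path_edges (PP u v) = {{phi 2, {X 2, Y (v - 3)}}, {{X 2, Y (v - 3)}, phi v}}"
  by (simp add: PP_def pe3)
lemma PP_B: "u = 3 \<Longrightarrow> v \<noteq> 4 \<Longrightarrow> path_edges (PP u v) = {{phi 3, {X 3, Y (v - 3)}}, {{X 3, Y (v - 3)}, phi v}}"
  by (simp add: PP_def pe3)
lemma PP_C: "u = 0 \<Longrightarrow> v = 3 \<Longrightarrow> path_edges (PP u v) = {{phi 0, {X 2, Y 1}}, {{X 2, Y 1}, phi 3}}"
  by (simp add: PP_def pe3)
lemma PP_D: "\<not> (u = 2 \<and> v \<ge> 4) \<Longrightarrow> \<not> (u = 3 \<and> v \<noteq> 4) \<Longrightarrow> \<not> (u = 0 \<and> v = 3) \<Longrightarrow>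
   path_edges (PP u v) = {{phi u, phi v}}"
  by (auto simp add: PP_def pe2)

lemma PP_disj: assumes "u < v" "u' < v'" "(u, v) \<noteq> (u', v')"
  shows "path_edges (PP u v) \<inter> path_edges (PP u' v') = {}"
proof -
  have cs: "\<And>(u::nat) (v::nat) P. \<lbrakk>u = 2 \<Longrightarrow> v \<ge> 4 \<Longrightarrow> P; u = 3 \<Longrightarrow> v \<noteq> 4 \<Longrightarrow> P; u = 0 \<Longrightarrow> v = 3 \<Longrightarrow> P;
     \<not> (u = 2 \<and> v \<ge> 4) \<Longrightarrow> \<not> (u = 3 \<and> v \<noteq> 4) \<Longrightarrow> \<not> (u = 0 \<and> v = 3) \<Longrightarrow> P\<rbrakk> \<Longrightarrow> P"
    by blast
  note simps = doubleton_eq_iff phi_inj X2_not_phi X3_not_phi X23 XYeq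
  show ?thesis
    apply (rule cs[of u v]; rule cs[of u' v'])
    using assms
    by (simp_all add: PP_A PP_B PP_C PP_D) (auto simp: simps)
qed

theorem mainTheorem11:
  fixes t :: nat
  assumes "t \<ge> 5"
  shows "has_Kt_immersion (line_graph (H_graph t)) t"
  unfolding has_Kt_immersion_def
proof (intro exI conjI)
  show "inj_on phi {0..<t}"
    by (auto simp: inj_on_def phi_inj)
  show "phi ` {0..<t} \<subseteq> verts (line_graph (H_graph t))"
    using phi_mem assms by (auto simp: line_graph_def verts_def)
  show "\<forall>u v. u < v \<and> v < t \<longrightarrow> is_path (line_graph (H_graph t)) (PP u v) (phi u) (phi v)"
    using PP_path assms by blast
  show "\<forall>u v u' v'. u < v \<and> v < t \<and> u' < v' \<and> v' < t \<and> (u, v) \<noteq> (u', v') \<longrightarrow>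
            path_edges (PP u v) \<inter> path_edges (PP u' v') = {}"
    using PP_disj by blast
qed

end
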